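(* In a synchronized communication system (possibly after some robots have left), a ring of length $2k\pi$ contains at most $k$ robots. Moreover, if no robot has left the system, a ring of length $2k\pi$ contains exactly $k$ robots.
   Context: Model. A system consists of pairwise disjoint unit circles $C_1,\dots,C_n$ in the plane (trajectories) and a communication range $r>0$. Its communication graph $G$ has vertex set $\{C_1,\dots,C_n\}$, $C_i,C_j$ adjacent iff the distance between their centres is at most $2+r$. Positions on a circle are angles (mod $2\pi$). For an edge $(i,j)$, the link position $\phi_{ij}$ is the angle of the point of $C_i$ closest to $C_j$. A schedule $F=(f,g)$ assigns each circle a starting angle $f(C_i)$ and direction $g(C_i)\in\{1,-1\}$; a robot following it on $C_i$ is at $f(C_i)+g(C_i)2\pi t$ at time $t$. $F$ is a synchronization schedule if $g(C_i)=-g(C_j)$ for adjacent circles and robots following $F$ on adjacent $C_i,C_j$ are at $\phi_{ij},\phi_{ji}$ at exactly the same times. A synchronized communication system (SCS) consists of $n$ robots, initially one per circle, following a synchronization schedule, with the switching rule: when a robot on $C_i$ reaches $\phi_{ij}$ and $C_j$ is empty, it instantly passes to $C_j$ (instantaneously) and follows the schedule of $C_j$; if $C_j$ has a robot, they meet and each stays on its circle. Robots may leave the system (possibly at different times); the remaining ones never leave. Rings. Trace a point moving along a circle $C_i$ in direction $g(C_i)$; whenever it reaches a link position $\phi_{ij}$ of its current circle, it passes to $C_j$ at $\phi_{ji}$ and continues in direction $g(C_j)$. The closed curve traced is a ring; the circles decompose into rings overlapping only at link positions. The length of a ring is the total length of the circle arcs forming it (it is a multiple of $2\pi$). A robot is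 in a ring if it lies on a point of that ring. *)

theory Defs
  imports "HOL-Analysis.Analysis"
begin

text \<open>Circles are indexed by 0..n-1; circle i is the unit circle centred at c i.
  Positions on a circle are real angles, considered modulo 2 pi.\<close>

definition ang_eq :: "real \<Rightarrow> real \<Rightarrow> bool" where
  "ang_eq a b \<longleftrightarrow> (\<exists>m::int. a - b = 2 * pi * of_int m)"

definition trajectory_system :: "nat \<Rightarrow> (nat \<Rightarrow> complex) \<Rightarrow> real \<Rightarrow> bool" where
  "trajectory_system n c rr \<longleftrightarrow>
     rr > 0 \<and> (\<forall>i<n. \<forall>j<n. i \<noteq> j \<longrightarrow> dist (c i) (c j) > 2)"

definition adj :: "nat \<Rightarrow> (nat \<Rightarrow> complex) \<Rightarrow> real \<Rightarrow> nat \<Rightarrow> nat \<Rightarrow> bool" where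
  "adj n c rr i j \<longleftrightarrow> i < n \<and> j < n \<and> i \<noteq> j \<and> dist (c i) (c j) \<le> 2 + rr"

text \<open>Link position: angle of the point of circle i closest to circle j.\<close>
definition link :: "(nat \<Rightarrow> complex) \<Rightarrow> nat \<Rightarrow> nat \<Rightarrow> real" where
  "link c i j = Arg (c j - c i)"

text \<open>Well-definedness of the model: distinct neighbours of a circle have distinct link positions.\<close>
definition distinct_links :: "nat \<Rightarrow> (nat \<Rightarrow> complex) \<Rightarrow> real \<Rightarrow> bool" where
  "distinct_links n c rr \<longleftrightarrow>
     (\<forall>i j k. adj n c rr i j \<and> adj n c rr i k \<and> j \<noteq> k \<longrightarrow> \<not> ang_eq (link c i j) (link c i k))"

definition sched :: "(nat \<Rightarrow> real) \<Rightarrow> (nat \<Rightarrow> int) \<Rightarrow> nat \<Rightarrow> real \<Rightarrow> real" where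
  "sched f g i t = f i + of_int (g i) * (2 * pi * t)"

definition sync_schedule ::
  "nat \<Rightarrow> (nat \<Rightarrow> complex) \<Rightarrow> real \<Rightarrow> (nat \<Rightarrow> real) \<Rightarrow> (nat \<Rightarrow> int) \<Rightarrow> bool" where
  "sync_schedule n c rr f g \<longleftrightarrow>
     (\<forall>i<n. g i = 1 \<or> g i = -1) \<and>
     (\<forall>i j. adj n c rr i j \<longrightarrow>
        g i = - g j \<and>
        (\<forall>t. ang_eq (sched f g i t) (link c i j) \<longleftrightarrow> ang_eq (sched f g j t) (link c j i)))"

definition hit_dist :: "(nat \<Rightarrow> complex) \<Rightarrow> (nat \<Rightarrow> int) \<Rightarrow> nat \<Rightarrow> real \<Rightarrow> nat \<Rightarrow> real" where
  "hit_dist c g i th j =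
     (THE d. 0 < d \<and> d \<le> 2 * pi \<and> ang_eq (th + of_int (g i) * d) (link c i j))"

definition nbrs :: "nat \<Rightarrow> (nat \<Rightarrow> complex) \<Rightarrow> real \<Rightarrow> nat \<Rightarrow> nat set" where
  "nbrs n c rr i = {j. adj n c rr i j}"

text \<open>Length of the arc traversed on the current circle before passing to the next one.\<close>
definition step_len :: "nat \<Rightarrow> (nat \<Rightarrow> complex) \<Rightarrow> real \<Rightarrow> (nat \<Rightarrow> int) \<Rightarrow> nat \<times> real \<Rightarrow> real" where
  "step_len n c rr g p =
     (if nbrs n c rr (fst p) = {} then 2 * pi
      else Min (hit_dist c g (fst p) (snd p) ` nbrs n c rr (fst p)))"

text \<open>The state (circle, angle) just after passing to the next circle.\<close>
definition ring_next :: "nat \<Rightarrow> (nat \<Rightarrow> complex) \<Rightarrow> real \<Rightarrow> (nat \<Rightarrow> int) \<Rightarrow> nat \<times> real \<Rightarrow> nat \<times> real" where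
  "ring_next n c rr g p =
     (if nbrs n c rr (fst p) = {} then (fst p, snd p + of_int (g (fst p)) * (2 * pi))
      else (let j = (SOME j. j \<in> nbrs n c rr (fst p) \<and>
                            hit_dist c g (fst p) (snd p) j = step_len n c rr g p)
            in (j, link c j (fst p))))"

definition ring_state :: "nat \<Rightarrow> (nat \<Rightarrow> complex) \<Rightarrow> real \<Rightarrow> (nat \<Rightarrow> int) \<Rightarrow> nat \<Rightarrow> real \<Rightarrow> nat \<Rightarrow> nat \<times> real" where
  "ring_state n c rr g i0 th0 m = (ring_next n c rr g ^^ m) (i0, th0)"

definition ring_par :: "nat \<Rightarrow> (nat \<Rightarrow> complex) \<Rightarrow> real \<Rightarrow> (nat \<Rightarrow> int) \<Rightarrow> nat \<Rightarrow> real \<Rightarrow> nat \<Rightarrow> real" where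
  "ring_par n c rr g i0 th0 m = (\<Sum>l<m. step_len n c rr g (ring_state n c rr g i0 th0 l))"

text \<open>The traced point, at arc-length parameter s, is at (circle, angle) p
  (at a link position it is counted on the circle it has just passed to).\<close>
definition on_trace ::
  "nat \<Rightarrow> (nat \<Rightarrow> complex) \<Rightarrow> real \<Rightarrow> (nat \<Rightarrow> int) \<Rightarrow> nat \<Rightarrow> real \<Rightarrow> real \<Rightarrow> nat \<times> real \<Rightarrow> bool" where
  "on_trace n c rr g i0 th0 s p \<longleftrightarrow>
     (\<exists>m. ring_par n c rr g i0 th0 m \<le> s \<and> s < ring_par n c rr g i0 th0 (Suc m) \<and>
          fst p = fst (ring_state n c rr g i0 th0 m) \<and>
          ang_eq (snd p) (snd (ring_state n c rr g i0 th0 m)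
                   + of_int (g (fst p)) * (s - ring_par n c rr g i0 th0 m)))"

text \<open>The ring through the point at angle th0 of circle i0, as a set of (circle, angle) points.\<close>
definition ring_pts :: "nat \<Rightarrow> (nat \<Rightarrow> complex) \<Rightarrow> real \<Rightarrow> (nat \<Rightarrow> int) \<Rightarrow> nat \<Rightarrow> real \<Rightarrow> (nat \<times> real) set" where
  "ring_pts n c rr g i0 th0 = {p. \<exists>s\<ge>0. on_trace n c rr g i0 th0 s p}"

definition ring_length_is ::
  "nat \<Rightarrow> (nat \<Rightarrow> complex) \<Rightarrow> real \<Rightarrow> (nat \<Rightarrow> int) \<Rightarrow> nat \<Rightarrow> real \<Rightarrow> real \<Rightarrow> bool" where
  "ring_length_is n c rr g i0 th0 L \<longleftrightarrow>
     L > 0 \<and> on_trace n c rr g i0 th0 L (i0, th0) \<and>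
     (\<forall>s. 0 < s \<and> s < L \<longrightarrow> \<not> on_trace n c rr g i0 th0 s (i0, th0))"

text \<open>Robots are indexed 0..n-1, robot r starts on circle r. lv r is its leaving time
  (None: never leaves); it is in the system at times t < leaving time.
  pos r t is the circle robot r is on at time t; its angle is sched f g (pos r t) t.\<close>

definition present :: "(nat \<Rightarrow> real option) \<Rightarrow> nat \<Rightarrow> real \<Rightarrow> bool" where
  "present lv r t \<longleftrightarrow> (case lv r of None \<Rightarrow> True | Some tau \<Rightarrow> t < tau)"

definition left_lim :: "(nat \<Rightarrow> real \<Rightarrow> nat) \<Rightarrow> nat \<Rightarrow> real \<Rightarrow> nat \<Rightarrow> bool" where
  "left_lim pos r t i \<longleftrightarrow> (\<exists>e>0. \<forall>s. t - e < s \<and> s < t \<longrightarrow> pos r s = i)"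

text \<open>Circle j is empty at time t (just before any switch happening at t).\<close>
definition circle_empty :: "nat \<Rightarrow> (nat \<Rightarrow> real option) \<Rightarrow> (nat \<Rightarrow> real \<Rightarrow> nat) \<Rightarrow> nat \<Rightarrow> real \<Rightarrow> bool" where
  "circle_empty n lv pos j t \<longleftrightarrow> \<not> (\<exists>r'<n. present lv r' t \<and> left_lim pos r' t j)"

definition scs_run ::
  "nat \<Rightarrow> (nat \<Rightarrow> complex) \<Rightarrow> real \<Rightarrow> (nat \<Rightarrow> real) \<Rightarrow> (nat \<Rightarrow> int) \<Rightarrow>
   (nat \<Rightarrow> real option) \<Rightarrow> (nat \<Rightarrow> real \<Rightarrow> nat) \<Rightarrow> bool" where
  "scs_run n c rr f g lv pos \<longleftrightarrow>
     (\<forall>r<n. pos r 0 = r) \<and>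
     (\<forall>r<n. \<forall>t\<ge>0. present lv r t \<longrightarrow> pos r t < n) \<and>
     (\<forall>r<n. \<forall>t\<ge>0. present lv r t \<longrightarrow> (\<exists>e>0. \<forall>s. t \<le> s \<and> s < t + e \<longrightarrow> pos r s = pos r t)) \<and>
     (\<forall>r<n. \<forall>t>0. present lv r t \<longrightarrow>
        (\<exists>i. left_lim pos r t i \<and>
           ((\<exists>j. adj n c rr i j \<and> ang_eq (sched f g i t) (link c i j) \<and>
                 circle_empty n lv pos j t \<and> pos r t = j) \<or>
            (\<not> (\<exists>j. adj n c rr i j \<and> ang_eq (sched f g i t) (link c i j) \<and>
                 circle_empty n lv pos j t) \<and> pos r t = i))))"

definition robots_in_ring ::
  "nat \<Rightarrow> (nat \<Rightarrow> complex) \<Rightarrow> real \<Rightarrow> (nat \<Rightarrow> real) \<Rightarrow> (nat \<Rightarrow> int) \<Rightarrow>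
   (nat \<Rightarrow> real option) \<Rightarrow> (nat \<Rightarrow> real \<Rightarrow> nat) \<Rightarrow> nat \<Rightarrow> real \<Rightarrow> real \<Rightarrow> nat set" where
  "robots_in_ring n c rr f g lv pos i0 th0 t =
     {r. r < n \<and> present lv r t \<and> (pos r t, sched f g (pos r t) t) \<in> ring_pts n c rr g i0 th0}"

end

theory Submission
  imports Defs
begin

lemma ang_eq_refl[simp]: "ang_eq a a"
  unfolding ang_eq_def by (rule exI[of _ 0]) simp
lemma ang_eq_sym: "ang_eq a b \<Longrightarrow> ang_eq b a"
  unfolding ang_eq_def by (metis minus_diff_eq mult_minus_right of_int_minus)
lemma ang_eq_trans: "ang_eq a b \<Longrightarrow> ang_eq b d \<Longrightarrow> ang_eq a d"
proof -
  assume "ang_eq a b" "ang_eq b d"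
  then obtain m1 m2 :: int where "a - b = 2*pi*m1" "b - d = 2*pi*m2" unfolding ang_eq_def by blast
  then have "a - d = 2*pi* of_int (m1+m2)" by (simp add: algebra_simps)
  then show ?thesis unfolding ang_eq_def by blast
qed
lemma ang_eq_add: "ang_eq a b \<Longrightarrow> ang_eq (a + x) (b + x)"
  unfolding ang_eq_def by simp
lemma ang_eq_shift: "ang_eq (a + 2*pi* of_int m) a"
  unfolding ang_eq_def by auto
lemma ang_eq_eqI: "a = b \<Longrightarrow> ang_eq a b" by simp

lemma gsq: "g = 1 \<or> g = -1 \<Longrightarrow> (of_int g::real) * of_int g = 1"
  by auto

lemma hit_unique:
  assumes gi: "g i = 1 \<or> g i = -1" and d: "0 < d" "d \<le> 2*pi"
    and a: "ang_eq (th + of_int (g i)*d) (link c i j)"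
  shows "hit_dist c g i th j = d"
  unfolding hit_dist_def
proof (rule the_equality)
  show "0 < d \<and> d \<le> 2 * pi \<and> ang_eq (th + real_of_int (g i) * d) (link c i j)" using d a by simp
next
  fix d' assume h: "0 < d' \<and> d' \<le> 2 * pi \<and> ang_eq (th + real_of_int (g i) * d') (link c i j)"
  then have "ang_eq (th + real_of_int (g i) * d') (th + of_int (g i)*d)"
    using a ang_eq_sym ang_eq_trans by blast
  then obtain m :: int where m: "(th + real_of_int (g i) * d') - (th + of_int (g i)*d) = 2*pi*m"
    unfolding ang_eq_def by blast
  have "d' - d = 2*pi*m \<or> d' - d = - 2*pi*m" using gi m by (auto simp: algebra_simps)
  then obtain m' :: int where m': "d' - d = 2*pi*m'" by (metis mult_minus_right of_int_minus mult_minus_left)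
  have "\<bar>d' - d\<bar> < 2*pi" using h d by auto
  then have "2*pi*\<bar>of_int m'\<bar> < 2*pi*1" using m' pi_gt_zero by (simp add: abs_mult)
  then have "\<bar>of_int m'::real\<bar> < 1" using pi_gt_zero by (simp only: mult_less_cancel_left_pos)
  then have "\<bar>m'\<bar> < 1" by linarith
  then have "m' = 0" by simp
  then show "d' = d" using m' by simp
qed

lemma hit_ex:
  assumes gi: "g i = 1 \<or> g i = -1"
  shows "\<exists>d. 0 < d \<and> d \<le> 2*pi \<and> ang_eq (th + of_int (g i)*d) (link c i j)"
proof -
  define x where "x = of_int (g i) * (link c i j - th)"
  define d where "d = x - 2*pi* of_int (\<lceil>x/(2*pi)\<rceil>) + 2*pi"
  have c1: "of_int \<lceil>x/(2*pi)\<rceil> \<ge> x/(2*pi)" by linarith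
  have c2: "of_int \<lceil>x/(2*pi)\<rceil> - 1 < x/(2*pi)" by linarith
  have "x \<le> of_int \<lceil>x/(2*pi)\<rceil> * (2*pi)" using c1 pi_gt_zero by (simp only: pos_divide_le_eq)
  moreover have "(of_int \<lceil>x/(2*pi)\<rceil> - 1) * (2*pi) < x" using c2 pi_gt_zero by (simp only: pos_less_divide_eq)
  ultimately have d: "0 < d" "d \<le> 2*pi" unfolding d_def by (auto simp: algebra_simps)
  have gg: "(of_int (g i)::real) * of_int (g i) = 1" using gi by auto
  have gx: "of_int (g i) * x = link c i j - th" unfolding x_def by (simp add: gg flip: mult.assoc)
  have "th + of_int (g i)*d = th + of_int (g i) * x + 2*pi* of_int (g i * (1 - \<lceil>x/(2*pi)\<rceil>))"
    unfolding d_def by (simp add: algebra_simps)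
  then have "th + of_int (g i)*d = link c i j + 2*pi* of_int (g i * (1 - \<lceil>x/(2*pi)\<rceil>))"
    using gx by simp
  then have "ang_eq (th + of_int (g i)*d) (link c i j)" using ang_eq_shift by metis
  then show ?thesis using d by blast
qed

lemma hit_props:
  assumes gi: "g i = 1 \<or> g i = -1"
  shows "0 < hit_dist c g i th j \<and> hit_dist c g i th j \<le> 2*pi \<and>
     ang_eq (th + of_int (g i)*hit_dist c g i th j) (link c i j)"
proof -
  obtain d where d: "0 < d" "d \<le> 2*pi" "ang_eq (th + of_int (g i)*d) (link c i j)"
    using hit_ex[of g i th c j] gi by blast
  then have "hit_dist c g i th j = d" using hit_unique[of g i d th c j] gi by blast
  then show ?thesis using d by simp
qed


locale ringctx =
  fixes n :: nat and c :: "nat \<Rightarrow> complex" and rr :: real and f :: "nat \<Rightarrow> real"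
    and g :: "nat \<Rightarrow> int" and i0 :: nat and th0 :: real
  assumes sync: "sync_schedule n c rr f g" and i0: "i0 < n"
begin

abbreviation "P \<equiv> ring_state n c rr g i0 th0"
abbreviation "par \<equiv> ring_par n c rr g i0 th0"
abbreviation "SL \<equiv> step_len n c rr g"
abbreviation "RN \<equiv> ring_next n c rr g"
abbreviation "NB \<equiv> nbrs n c rr"
abbreviation "ot \<equiv> on_trace n c rr g i0 th0"

lemma gpm: "i < n \<Longrightarrow> g i = 1 \<or> g i = -1"
  using sync unfolding sync_schedule_def by blast

lemma adj_sym: "adj n c rr i j \<Longrightarrow> adj n c rr j i"
  unfolding adj_def by (auto simp: dist_commute)

lemma nb_lt: "j \<in> NB i \<Longrightarrow> i < n \<and> j < n"
  unfolding nbrs_def adj_def by auto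

lemma nb_fin: "finite (NB i)"
  by (rule finite_subset[of _ "{..<n}"]) (auto dest: nb_lt)

lemma nb_sym: "j \<in> NB i \<Longrightarrow> i \<in> NB j"
  unfolding nbrs_def using adj_sym by auto

lemma step_pos: "SL p > 0"
proof (cases "NB (fst p) = {}")
  case True then show ?thesis unfolding step_len_def by simp
next
  case False
  then obtain j0 where j0: "j0 \<in> NB (fst p)" by blast
  then have "fst p < n" using nb_lt by blast
  then have gi: "g (fst p) = 1 \<or> g (fst p) = -1" by (rule gpm)
  have "\<forall>x \<in> hit_dist c g (fst p) (snd p) ` NB (fst p). x > 0"
    using hit_props[of g "fst p", OF gi] by blast
  then have "Min (hit_dist c g (fst p) (snd p) ` NB (fst p)) > 0"
    using False nb_fin by (simp)
  then show ?thesis using False unfolding step_len_def by simp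
qed

lemma next_ne:
  assumes "NB (fst p) \<noteq> {}"
  shows "\<exists>j \<in> NB (fst p). hit_dist c g (fst p) (snd p) j = SL p \<and> RN p = (j, link c j (fst p))"
proof -
  let ?h = "hit_dist c g (fst p) (snd p)"
  have "Min (?h ` NB (fst p)) \<in> ?h ` NB (fst p)" using assms nb_fin by (intro Min_in) auto
  then have ex: "\<exists>j. j \<in> NB (fst p) \<and> ?h j = SL p" using assms unfolding step_len_def by auto
  define j where "j = (SOME j. j \<in> NB (fst p) \<and> ?h j = SL p)"
  have j: "j \<in> NB (fst p) \<and> ?h j = SL p" unfolding j_def by (rule someI_ex[OF ex])
  have "RN p = (j, link c j (fst p))" using assms unfolding ring_next_def j_def Let_def by simp
  then show ?thesis using j by blast
qed

lemma P0: "P 0 = (i0, th0)" unfolding ring_state_def by simp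
lemma PS: "P (Suc m) = RN (P m)" unfolding ring_state_def by simp
lemma Padd: "P (m + y) = (RN ^^ y) (P m)" unfolding ring_state_def
  by (metis add.commute comp_apply funpow_add)
lemma par0: "par 0 = 0" unfolding ring_par_def by simp
lemma parS: "par (Suc m) = par m + SL (P m)" unfolding ring_par_def by simp
lemma par_smono: "m < m' \<Longrightarrow> par m < par m'"
proof -
  assume "m < m'"
  have "\<And>k. par k < par (Suc k)" using parS step_pos by (metis less_add_same_cancel1)
  then show ?thesis using lift_Suc_mono_less[of par m m'] \<open>m < m'\<close> by blast
qed
lemma par_mono: "m \<le> m' \<Longrightarrow> par m \<le> par m'"
  using par_smono by (cases "m = m'") (auto simp: less_le)
lemma par_nonneg: "par m \<ge> 0" using par_mono[of 0 m] par0 by simp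
lemma par_diff: "par (m + y) - par m = (\<Sum>l<y. SL (P (m + l)))"
  by (induction y) (auto simp: parS)

lemma idx_unique:
  assumes "par m \<le> s" "s < par (Suc m)" "par m' \<le> s" "s < par (Suc m')"
  shows "m = m'"
proof (rule ccontr)
  assume "m \<noteq> m'"
  then have "Suc m \<le> m' \<or> Suc m' \<le> m" by auto
  then show False using par_mono assms by fastforce
qed

lemma idx_ex:
  assumes "0 \<le> s" "s < par M"
  shows "\<exists>m<M. par m \<le> s \<and> s < par (Suc m)"
  using assms
proof (induction M)
  case 0 then show ?case using par0 by simp
next
  case (Suc M)
  show ?case
  proof (cases "s < par M")
    case True
    then obtain m where "m < M" "par m \<le> s \<and> s < par (Suc m)" using Suc by blast
    then show ?thesis by (intro exI[of _ m]) auto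
  next
    case False then show ?thesis using Suc by (intro exI[of _ M]) auto
  qed
qed

end

locale ringne = ringctx +
  assumes ne: "NB i0 \<noteq> {}"
begin

lemma circ: "fst (P m) < n \<and> NB (fst (P m)) \<noteq> {}"
proof (induction m)
  case 0 then show ?case using ne i0 P0 by simp
next
  case (Suc m)
  then obtain j where j: "j \<in> NB (fst (P m))" "RN (P m) = (j, link c j (fst (P m)))"
    using next_ne by blast
  then have "fst (P m) \<in> NB j" using nb_sym by blast
  then show ?case using j PS nb_lt by auto
qed

lemma SS:
  assumes ne': "NB (fst p) \<noteq> {}" and fq: "fst q = fst p" and d: "0 \<le> d" "d < SL p"
    and a: "ang_eq (snd q) (snd p + of_int (g (fst p)) * d)"
  shows "SL p = d + SL q \<and> RN p = RN q"
proof -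
  let ?i = "fst p"
  let ?N = "NB ?i"
  let ?hp = "hit_dist c g ?i (snd p)"
  let ?hq = "hit_dist c g ?i (snd q)"
  have "?i < n" using ne' nb_lt by blast
  then have gi: "g ?i = 1 \<or> g ?i = -1" by (rule gpm)
  have slp: "SL p = Min (?hp ` ?N)" using ne' unfolding step_len_def by simp
  have slq: "SL q = Min (?hq ` ?N)" using ne' fq unfolding step_len_def by simp
  have hq: "?hq j = ?hp j - d" if "j \<in> ?N" for j
  proof -
    have "?hp j \<ge> SL p" unfolding slp using that nb_fin by simp
    then have lt: "d < ?hp j" using d by simp
    have hp: "0 < ?hp j \<and> ?hp j \<le> 2*pi \<and> ang_eq (snd p + of_int (g ?i) * ?hp j) (link c ?i j)"
      by (rule hit_props[of g ?i, OF gi])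
    have e0: "snd p + of_int (g ?i) * d + of_int (g ?i) * (?hp j - d) = snd p + of_int (g ?i) * ?hp j"
      by (simp add: algebra_simps)
    have "ang_eq (snd q + of_int (g ?i) * (?hp j - d)) (snd p + of_int (g ?i) * d + of_int (g ?i) * (?hp j - d))"
      using ang_eq_add[OF a] by blast
    then have "ang_eq (snd q + of_int (g ?i) * (?hp j - d)) (snd p + of_int (g ?i) * ?hp j)"
      unfolding e0 .
    then have "ang_eq (snd q + of_int (g ?i) * (?hp j - d)) (link c ?i j)"
      using hp ang_eq_trans by blast
    then show ?thesis using hit_unique[of g ?i "?hp j - d" "snd q" c j] gi lt hp d by simp
  qed
  have img: "?hq ` ?N = (\<lambda>x. x - d) ` (?hp ` ?N)" using hq by (auto simp: image_image)
  have mono: "mono (\<lambda>x::real. x - d)" by (rule monoI) simp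
  have "SL q = SL p - d" unfolding slq slp img
    using mono_Min_commute[OF mono, of "?hp ` ?N"] nb_fin ne' by simp
  moreover have "RN p = RN q"
  proof -
    have "(\<lambda>j. j \<in> ?N \<and> ?hq j = SL q) = (\<lambda>j. j \<in> ?N \<and> ?hp j = SL p)"
      using hq \<open>SL q = SL p - d\<close> by (auto simp: fun_eq_iff)
    then show ?thesis unfolding ring_next_def using fq ne' by (simp add: Let_def)
  qed
  ultimately show ?thesis by simp
qed


lemma sched_shift: "sched f g i (t + x/(2*pi)) = sched f g i t + of_int (g i) * x"
  unfolding sched_def by (simp add: algebra_simps)

lemma TS:
  assumes "ang_eq th0 (sched f g i0 tau)"
  shows "ang_eq (snd (P m)) (sched f g (fst (P m)) (tau + par m/(2*pi)))"
proof (induction m)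
  case 0 then show ?case using assms P0 par0 by simp
next
  case (Suc m)
  let ?p = "P m"
  let ?i = "fst ?p"
  have ci: "?i < n" "NB ?i \<noteq> {}" using circ by auto
  obtain j where j: "j \<in> NB ?i" "hit_dist c g ?i (snd ?p) j = SL ?p" "RN ?p = (j, link c j ?i)"
    using next_ne[OF ci(2)] by blast
  have gi: "g ?i = 1 \<or> g ?i = -1" using gpm ci by blast
  have h: "ang_eq (snd ?p + of_int (g ?i) * SL ?p) (link c ?i j)"
    using hit_props[of g ?i, OF gi, of c "snd ?p" j] j(2) by simp
  define t' where "t' = tau + par (Suc m)/(2*pi)"
  have "t' = (tau + par m/(2*pi)) + SL ?p/(2*pi)" unfolding t'_def parS by (simp add: add_divide_distrib)
  then have s1: "sched f g ?i t' = sched f g ?i (tau + par m/(2*pi)) + of_int (g ?i) * SL ?p"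
    using sched_shift by simp
  have "ang_eq (sched f g ?i (tau + par m/(2*pi)) + of_int (g ?i) * SL ?p) (snd ?p + of_int (g ?i) * SL ?p)"
    using ang_eq_add[OF ang_eq_sym[OF Suc.IH]] by blast
  then have "ang_eq (sched f g ?i t') (snd ?p + of_int (g ?i) * SL ?p)" unfolding s1 .
  then have "ang_eq (sched f g ?i t') (link c ?i j)" using h by (rule ang_eq_trans)
  moreover have adj: "adj n c rr ?i j" using j(1) unfolding nbrs_def by simp
  ultimately have "ang_eq (sched f g j t') (link c j ?i)"
    using sync unfolding sync_schedule_def by blast
  then show ?case using j(3) PS unfolding t'_def by (simp add: ang_eq_sym)
qed

lemma TR:
  assumes "ang_eq th0 (sched f g i0 tau)" "ot s p"
  shows "ang_eq (snd p) (sched f g (fst p) (tau + s/(2*pi)))"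
proof -
  obtain m where m: "par m \<le> s" "s < par (Suc m)" "fst p = fst (P m)"
    "ang_eq (snd p) (snd (P m) + of_int (g (fst p)) * (s - par m))"
    using assms(2) unfolding on_trace_def by blast
  have "ang_eq (snd (P m) + of_int (g (fst p)) * (s - par m))
     (sched f g (fst p) (tau + par m/(2*pi)) + of_int (g (fst p)) * (s - par m))"
    using ang_eq_add[OF TS[OF assms(1), of m]] m(3) by simp
  moreover have eq: "tau + s/(2*pi) = (tau + par m/(2*pi)) + (s - par m)/(2*pi)"
    by (simp add: diff_divide_distrib)
  have "sched f g (fst p) (tau + s/(2*pi)) = sched f g (fst p) (tau + par m/(2*pi)) + of_int (g (fst p)) * (s - par m)"
    by (subst eq) (rule sched_shift)
  ultimately have "ang_eq (snd (P m) + of_int (g (fst p)) * (s - par m))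
     (sched f g (fst p) (tau + s/(2*pi)))" by simp
  then show ?thesis using m(4) by (rule ang_eq_trans[rotated])
qed

lemma shift_eq:
  assumes "P k = P k'"
  shows "P (k + y) = P (k' + y) \<and> par (k + y) - par k = par (k' + y) - par k'"
proof -
  have "P (k + l) = P (k' + l)" for l using assms Padd by metis
  then show ?thesis using Padd assms par_diff by simp
qed

lemma ot0: "ot 0 (i0, th0)"
  unfolding on_trace_def using P0 par0 step_pos parS
  by (intro exI[of _ 0]) (auto)

lemma DET:
  assumes oa: "ot a q" and ob: "ot b q" and ox: "ot (a + x) p" and x: "x \<ge> 0"
  shows "ot (b + x) p"
proof -
  obtain ma where A: "par ma \<le> a" "a < par (Suc ma)" "fst q = fst (P ma)"
    "ang_eq (snd q) (snd (P ma) + of_int (g (fst q)) * (a - par ma))"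
    using oa unfolding on_trace_def by blast
  obtain mb where B: "par mb \<le> b" "b < par (Suc mb)" "fst q = fst (P mb)"
    "ang_eq (snd q) (snd (P mb) + of_int (g (fst q)) * (b - par mb))"
    using ob unfolding on_trace_def by blast
  obtain m where M: "par m \<le> a + x" "a + x < par (Suc m)" "fst p = fst (P m)"
    "ang_eq (snd p) (snd (P m) + of_int (g (fst p)) * (a + x - par m))"
    using ox unfolding on_trace_def by blast
  have SA: "SL (P ma) = (a - par ma) + SL q \<and> RN (P ma) = RN q"
    using SS[of "P ma" q "a - par ma"] circ A parS by auto
  have SB: "SL (P mb) = (b - par mb) + SL q \<and> RN (P mb) = RN q"
    using SS[of "P mb" q "b - par mb"] circ B parS by auto
  have pa: "par (Suc ma) = a + SL q" using SA parS by simp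
  have pb: "par (Suc mb) = b + SL q" using SB parS by simp
  have "\<not> m < ma"
  proof
    assume "m < ma"
    then have "par (Suc m) \<le> par ma" using par_mono by simp
    then show False using M A x by simp
  qed
  then have "m = ma \<or> (\<exists>y. m = Suc ma + y)"
    by (cases "m = ma") (simp, rule disjI2, rule exI[of _ "m - Suc ma"], simp)
  then show ?thesis
  proof
    assume mm: "m = ma"
    have gq: "g (fst p) = g (fst q)" using M(3) A(3) mm by simp
    have e1: "ang_eq (snd (P ma) + of_int (g (fst q)) * (a + x - par ma)) (snd q + of_int (g (fst q)) * x)"
    proof -
      have "ang_eq (snd (P ma) + of_int (g (fst q)) * (a - par ma) + of_int (g (fst q)) * x) (snd q + of_int (g (fst q)) * x)"
        using ang_eq_add[OF ang_eq_sym[OF A(4)]] by blast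
      then show ?thesis by (simp add: algebra_simps)
    qed
    have e2: "ang_eq (snd q + of_int (g (fst q)) * x) (snd (P mb) + of_int (g (fst q)) * (b + x - par mb))"
    proof -
      have "ang_eq (snd q + of_int (g (fst q)) * x) (snd (P mb) + of_int (g (fst q)) * (b - par mb) + of_int (g (fst q)) * x)"
        using ang_eq_add[OF B(4)] by blast
      then show ?thesis by (simp add: algebra_simps)
    qed
    have "ang_eq (snd p) (snd (P mb) + of_int (g (fst p)) * (b + x - par mb))"
    proof -
      have "ang_eq (snd p) (snd (P ma) + of_int (g (fst q)) * (a + x - par ma))" using M(4) mm gq by simp
      then have "ang_eq (snd p) (snd q + of_int (g (fst q)) * x)" using e1 by (rule ang_eq_trans)
      then show ?thesis using e2 gq by (simp add: ang_eq_trans)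
    qed
    moreover have "par mb \<le> b + x" "b + x < par (Suc mb)" using B x M mm pa pb by auto
    moreover have "fst p = fst (P mb)" using M(3) mm A(3) B(3) by simp
    ultimately show ?thesis unfolding on_trace_def by blast
  next
    assume "\<exists>y. m = Suc ma + y"
    then obtain y where y: "m = Suc ma + y" by blast
    have eq: "P (Suc ma) = P (Suc mb)" using SA SB PS by simp
    have s1: "P (Suc ma + y) = P (Suc mb + y)" "par (Suc ma + y) - par (Suc ma) = par (Suc mb + y) - par (Suc mb)"
      using shift_eq[OF eq, of y] by auto
    have s2: "par (Suc ma + Suc y) - par (Suc ma) = par (Suc mb + Suc y) - par (Suc mb)"
      using shift_eq[OF eq, of "Suc y"] by auto
    have c1: "par (Suc mb + y) \<le> b + x" "b + x < par (Suc (Suc mb + y))"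
      using s1 s2 M y pa pb by auto
    have c2: "fst p = fst (P (Suc mb + y))" using M(3) y s1 by simp
    have dd: "b + x - par (Suc mb + y) = a + x - par m" using s1 y pa pb by simp
    have e: "snd (P m) + of_int (g (fst p)) * (a + x - par m) = snd (P (Suc mb + y)) + of_int (g (fst p)) * (b + x - par (Suc mb + y))"
      using s1(1) y dd by simp
    have c3: "ang_eq (snd p) (snd (P (Suc mb + y)) + of_int (g (fst p)) * (b + x - par (Suc mb + y)))"
      using M(4) e by (simp only:)
    show ?thesis unfolding on_trace_def by (intro exI[of _ "Suc mb + y"] conjI c1 c2 c3)
  qed
qed

end

locale ringlen = ringne +
  fixes k :: nat
  assumes RL: "ring_length_is n c rr g i0 th0 (2 * real k * pi)"
begin

abbreviation "L \<equiv> 2 * real k * pi"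

lemma L_pos: "L > 0" using RL unfolding ring_length_is_def by simp
lemma otL: "ot L (i0, th0)" using RL unfolding ring_length_is_def by simp
lemma Lmin: "0 < s \<Longrightarrow> s < L \<Longrightarrow> \<not> ot s (i0, th0)" using RL unfolding ring_length_is_def by simp

lemma red:
  assumes "0 \<le> s" "ot s p"
  shows "\<exists>s'. 0 \<le> s' \<and> s' < L \<and> ot s' p"
proof -
  have "\<forall>s. 0 \<le> s \<and> s < real N * L \<and> ot s p \<longrightarrow> (\<exists>s'. 0 \<le> s' \<and> s' < L \<and> ot s' p)" for N
  proof (induction N)
    case 0 then show ?case by auto
  next
    case (Suc N)
    show ?case
    proof (intro allI impI)
      fix s assume h: "0 \<le> s \<and> s < real (Suc N) * L \<and> ot s p"
      show "\<exists>s'. 0 \<le> s' \<and> s' < L \<and> ot s' p"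
      proof (cases "s < L")
        case True then show ?thesis using h by blast
      next
        case False
        have "ot (L + (s - L)) p" using h by simp
        then have "ot (0 + (s - L)) p" using DET[OF otL ot0] False by simp
        moreover have "s - L < real N * L" using h by (simp add: algebra_simps)
        ultimately show ?thesis using Suc.IH False by auto
      qed
    qed
  qed
  moreover obtain N where "s < real N * L" using ex_less_of_nat_mult[OF L_pos] by blast
  ultimately show ?thesis using assms by blast
qed

lemma inj_tr:
  assumes "0 \<le> s1" "s1 < s2" "s2 < L" "ot s1 q" "ot s2 q"
  shows False
proof -
  have "ot (s1 + (L - s1)) (i0, th0)" using otL by simp
  then have "ot (s2 + (L - s1)) (i0, th0)" using DET[OF assms(4) assms(5)] assms by simp
  then have "ot (L + (s2 - s1)) (i0, th0)" by (simp add: algebra_simps)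
  then have "ot (0 + (s2 - s1)) (i0, th0)" using DET[OF otL ot0] assms by simp
  then show False using Lmin[of "s2 - s1"] assms by simp
qed

lemma ot_fst: "ot s p \<Longrightarrow> ot s p' \<Longrightarrow> fst p = fst p'"
  unfolding on_trace_def using idx_unique by metis

lemma ot_lt: "ot s p \<Longrightarrow> fst p < n"
  unfolding on_trace_def using circ by auto

lemma ot_ang: assumes "ot s p" "ang_eq (snd p) a" shows "ot s (fst p, a)"
proof -
  obtain m where m: "par m \<le> s" "s < par (Suc m)" "fst p = fst (P m)"
    "ang_eq (snd p) (snd (P m) + of_int (g (fst p)) * (s - par m))"
    using assms(1) unfolding on_trace_def by blast
  have "ang_eq a (snd (P m) + of_int (g (fst p)) * (s - par m))"
    using ang_eq_trans[OF ang_eq_sym[OF assms(2)] m(4)] .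
  then show ?thesis unfolding on_trace_def using m by (intro exI[of _ m]) simp
qed

lemma ot_ex:
  assumes "0 \<le> s" "s < L"
  shows "\<exists>p. ot s p"
proof -
  obtain mL where "par mL \<le> L" "L < par (Suc mL)" using otL unfolding on_trace_def by blast
  then obtain m where m: "par m \<le> s" "s < par (Suc m)" using idx_ex[of s "Suc mL"] assms by auto
  show ?thesis unfolding on_trace_def
    by (rule exI[of _ "(fst (P m), snd (P m) + of_int (g (fst (P m))) * (s - par m))"], rule exI[of _ m]) (simp add: m)
qed


lemma tau_ex: "\<exists>tau. ang_eq th0 (sched f g i0 tau)"
proof -
  have gi: "g i0 = 1 \<or> g i0 = -1" using gpm i0 by blast
  define tau where "tau = of_int (g i0) * (th0 - f i0) / (2*pi)"
  have "sched f g i0 tau = th0" unfolding sched_def tau_def using gi by auto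
  then show ?thesis by (intro exI[of _ tau]) simp
qed

lemma intdiff:
  assumes "i < n" "ang_eq (sched f g i t) (sched f g i u)"
  shows "\<exists>z::int. t - u = of_int z"
proof -
  have gi: "g i = 1 \<or> g i = -1" using gpm assms by blast
  obtain m :: int where m: "sched f g i t - sched f g i u = 2*pi* of_int m" using assms unfolding ang_eq_def by blast
  then have "(2*pi)*(of_int (g i) * (t - u)) = (2*pi)* of_int m" unfolding sched_def by (simp add: algebra_simps)
  then have "of_int (g i) * (t - u) = of_int m" using pi_gt_zero by (simp only: mult_cancel_left) simp
  then have "t - u = of_int (g i * m)" using gi by auto
  then show ?thesis by blast
qed

lemma sched_int: "ang_eq (sched f g i (t + of_int z)) (sched f g i t)"
proof -
  have "sched f g i (t + of_int z) = sched f g i t + 2*pi* of_int (g i * z)"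
    unfolding sched_def by (simp add: algebra_simps)
  then show ?thesis using ang_eq_shift by metis
qed

lemma count:
  fixes Rob :: "nat set" and ps :: "nat \<Rightarrow> nat" and t :: real
  assumes RS: "Rob \<subseteq> {..<n}" and inj: "inj_on ps Rob" and psn: "ps ` Rob \<subseteq> {..<n}"
  defines "A \<equiv> {r \<in> Rob. (ps r, sched f g (ps r) t) \<in> ring_pts n c rr g i0 th0}"
  shows "card A \<le> k \<and> (ps ` Rob = {..<n} \<longrightarrow> card A = k)"
proof -
  obtain tau where tau: "ang_eq th0 (sched f g i0 tau)" using tau_ex by blast
  have finA: "finite A" using RS unfolding A_def by (auto intro: finite_subset)
  have "\<forall>r\<in>A. \<exists>s. 0 \<le> s \<and> s < L \<and> ot s (ps r, sched f g (ps r) t)"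
    unfolding A_def ring_pts_def using red by blast
  then obtain S where S: "\<forall>r\<in>A. 0 \<le> S r \<and> S r < L \<and> ot (S r) (ps r, sched f g (ps r) t)"
    by (metis (no_types))
  have Z: "\<exists>z::int. t - tau - S r/(2*pi) = of_int z" if "r \<in> A" for r
  proof -
    have "ps r < n" using that psn unfolding A_def by auto
    moreover have "ang_eq (sched f g (ps r) t) (sched f g (ps r) (tau + S r/(2*pi)))"
      using TR[OF tau, of "S r" "(ps r, sched f g (ps r) t)"] S that by simp
    ultimately obtain z where "t - (tau + S r/(2*pi)) = of_int z" using intdiff by blast
    then show ?thesis by (intro exI[of _ z]) simp
  qed
  define h where "h r = nat \<lfloor>S r/(2*pi)\<rfloor>" for r
  have himg: "h ` A \<subseteq> {..<k}"
  proof
    fix x assume "x \<in> h ` A"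
    then obtain r where r: "r \<in> A" "x = h r" by blast
    have "S r / (2*pi) < real k" using S r(1) pi_gt_zero by (simp add: divide_less_eq algebra_simps)
    then have "\<lfloor>S r/(2*pi)\<rfloor> < int k" by linarith
    moreover have "0 \<le> \<lfloor>S r/(2*pi)\<rfloor>" using S r(1) by simp
    ultimately show "x \<in> {..<k}" using r unfolding h_def by (simp add: nat_less_iff)
  qed
  have hinj: "inj_on h A"
  proof (rule inj_onI)
    fix r1 r2 assume r: "r1 \<in> A" "r2 \<in> A" "h r1 = h r2"
    obtain z1 where z1: "t - tau - S r1/(2*pi) = of_int z1" using Z r by blast
    obtain z2 where z2: "t - tau - S r2/(2*pi) = of_int z2" using Z r by blast
    have x: "S r1/(2*pi) = S r2/(2*pi) + of_int (z2 - z1)" using z1 z2 by simp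
    have n1: "0 \<le> \<lfloor>S r1/(2*pi)\<rfloor>" "0 \<le> \<lfloor>S r2/(2*pi)\<rfloor>" using r S by auto
    have "\<lfloor>S r1/(2*pi)\<rfloor> = \<lfloor>S r2/(2*pi)\<rfloor>" using r(3) n1 unfolding h_def by (simp add: eq_nat_nat_iff)
    then have "z2 - z1 = 0" unfolding x by simp
    then have "S r1 = S r2" using x by simp
    then have "ps r1 = ps r2" using ot_fst S r by fastforce
    then show "r1 = r2" using inj r unfolding A_def by (auto dest: inj_onD)
  qed
  have le: "card A \<le> k" using card_inj_on_le[OF hinj himg] by simp
  moreover have "card A = k" if surj: "ps ` Rob = {..<n}"
  proof -
    define w where "w = t - tau"
    define fr where "fr = w - of_int \<lfloor>w\<rfloor>"
    have fr: "0 \<le> fr" "fr < 1" unfolding fr_def by linarith+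
    have "\<forall>m\<in>{..<k}. \<exists>r. r \<in> A \<and> ot (2*pi*(fr + real m)) (ps r, sched f g (ps r) t)"
    proof
      fix m assume m: "m \<in> {..<k}"
      let ?s = "2*pi*(fr + real m)"
      have s0: "0 \<le> ?s" using fr by simp
      have "fr + real m < real k" using fr m by auto
      then have "(2*pi)*(fr + real m) < (2*pi)*real k" using pi_gt_zero by (intro mult_strict_left_mono) auto
      then have sL: "?s < L" by (simp add: algebra_simps)
      obtain p where p: "ot ?s p" using ot_ex[OF s0 sL] by blast
      define C where "C = fst p"
      have Cn: "C < n" using ot_lt p unfolding C_def by blast
      have a1: "ang_eq (snd p) (sched f g C (tau + ?s/(2*pi)))" using TR[OF tau p] unfolding C_def .
      have "tau + ?s/(2*pi) = t + of_int (int m - \<lfloor>w\<rfloor>)" unfolding fr_def w_def by simp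
      then have "ang_eq (snd p) (sched f g C t)" using a1 sched_int ang_eq_trans by metis
      then have ot1: "ot ?s (C, sched f g C t)" using ot_ang[OF p] unfolding C_def by simp
      obtain r where r: "r \<in> Rob" "ps r = C" using Cn surj by (metis imageE lessThan_iff)
      have "\<exists>s\<ge>0. ot s (ps r, sched f g (ps r) t)" using r ot1 s0 by (intro exI[of _ ?s]) simp
      then have "r \<in> A" unfolding A_def ring_pts_def using r by simp
      then show "\<exists>r. r \<in> A \<and> ot ?s (ps r, sched f g (ps r) t)" using r ot1 by blast
    qed
    then obtain H where H: "\<forall>m\<in>{..<k}. H m \<in> A \<and> ot (2*pi*(fr + real m)) (ps (H m), sched f g (ps (H m)) t)"
      by (metis (no_types))
    have "inj_on H {..<k}"
    proof (rule inj_onI)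
      fix m1 m2 assume m: "m1 \<in> {..<k}" "m2 \<in> {..<k}" "H m1 = H m2"
      have key: False if "a \<in> {..<k}" "b \<in> {..<k}" "H a = H b" "a < b" for a b
      proof -
        have "2*pi*(fr + real a) < 2*pi*(fr + real b)" using that pi_gt_zero by simp
        moreover have "(2*pi)*(fr + real b) < (2*pi)*real k" using fr that pi_gt_zero by (intro mult_strict_left_mono) auto
        then have "2*pi*(fr + real b) < L" by (simp add: algebra_simps)
        moreover have "0 \<le> 2*pi*(fr + real a)" using fr by simp
        ultimately show False using inj_tr H that by metis
      qed
      show "m1 = m2" using key[of m1 m2] key[of m2 m1] m by (metis linorder_neqE_nat)
    qed
    moreover have "H ` {..<k} \<subseteq> A" using H by blast
    ultimately have "k \<le> card A" using card_inj_on_le[of H "{..<k}" A] finA by simp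
    then show ?thesis using le by simp
  qed
  ultimately show ?thesis by blast
qed

end

locale ringiso = ringctx +
  fixes k :: nat
  assumes iso: "NB i0 = {}"
    and RL: "ring_length_is n c rr g i0 th0 (2 * real k * pi)"
begin

lemma Piso: "P m = (i0, th0 + of_int (g i0) * (2*pi) * real m)"
proof (induction m)
  case 0 then show ?case using P0 by simp
next
  case (Suc m) then show ?case using PS iso unfolding ring_next_def by (simp add: algebra_simps)
qed

lemma pariso: "par m = 2*pi*real m"
proof (induction m)
  case 0 then show ?case using par0 by simp
next
  case (Suc m) then show ?case using parS Piso iso unfolding step_len_def by (simp add: algebra_simps)
qed

lemma ot_fst_iso: "ot s p \<Longrightarrow> fst p = i0"
  unfolding on_trace_def using Piso by auto

lemma k1: "k = 1"
proof -
  have gi: "g i0 = 1 \<or> g i0 = -1" using gpm i0 by blast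
  have "ang_eq th0 (th0 + of_int (g i0) * (2*pi))"
    using gi ang_eq_sym[OF ang_eq_shift[of th0 "g i0"]] by (simp add: algebra_simps)
  then have "ot (2*pi) (i0, th0)" unfolding on_trace_def using Piso pariso
    by (intro exI[of _ 1]) simp
  moreover have "k \<noteq> 0" using RL unfolding ring_length_is_def by auto
  moreover have "\<not> (0 < 2*pi \<and> 2*pi < 2 * real k * pi \<and> ot (2*pi) (i0, th0))"
    using RL unfolding ring_length_is_def by blast
  ultimately show ?thesis by (cases "k \<ge> 2") auto
qed

lemma ot_any: "\<exists>s\<ge>0. ot s (i0, a)"
proof -
  have gi: "g i0 = 1 \<or> g i0 = -1" using gpm i0 by blast
  define x where "x = of_int (g i0) * (a - th0)"
  define s where "s = x - 2*pi* of_int \<lfloor>x/(2*pi)\<rfloor>"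
  have c1: "of_int \<lfloor>x/(2*pi)\<rfloor> \<le> x/(2*pi)" by linarith
  have c2: "x/(2*pi) < of_int \<lfloor>x/(2*pi)\<rfloor> + 1" by linarith
  have "of_int \<lfloor>x/(2*pi)\<rfloor> * (2*pi) \<le> x" using c1 pi_gt_zero by (simp only: pos_le_divide_eq)
  moreover have "x < (of_int \<lfloor>x/(2*pi)\<rfloor> + 1) * (2*pi)" using c2 pi_gt_zero by (simp only: pos_divide_less_eq)
  ultimately have s: "0 \<le> s" "s < 2*pi" unfolding s_def by (auto simp: algebra_simps)
  have gg: "(of_int (g i0)::real) * of_int (g i0) = 1" using gi by auto
  have "th0 + of_int (g i0) * s = a + 2*pi* of_int (- g i0 * \<lfloor>x/(2*pi)\<rfloor>)"
  proof -
    have "of_int (g i0) * x = a - th0" unfolding x_def by (simp add: gg flip: mult.assoc)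
    then show ?thesis unfolding s_def by (simp add: algebra_simps)
  qed
  then have "ang_eq a (th0 + of_int (g i0) * s)" using ang_eq_sym ang_eq_shift by metis
  then have "ot s (i0, a)" unfolding on_trace_def using s Piso pariso
    by (intro exI[of _ 0]) simp
  then show ?thesis using s by blast
qed

lemma count_iso:
  fixes Rob :: "nat set" and ps :: "nat \<Rightarrow> nat" and t :: real
  assumes RS: "Rob \<subseteq> {..<n}" and inj: "inj_on ps Rob" and psn: "ps ` Rob \<subseteq> {..<n}"
  defines "A \<equiv> {r \<in> Rob. (ps r, sched f g (ps r) t) \<in> ring_pts n c rr g i0 th0}"
  shows "card A \<le> k \<and> (ps ` Rob = {..<n} \<longrightarrow> card A = k)"
proof -
  have sub: "A \<subseteq> {r \<in> Rob. ps r = i0}" unfolding A_def ring_pts_def using ot_fst_iso by fastforce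
  have one: "r1 = r2" if "r1 \<in> A" "r2 \<in> A" for r1 r2
    using sub that inj by (auto dest: inj_onD)
  have finA: "finite A" using RS unfolding A_def by (auto intro: finite_subset)
  have le: "card A \<le> 1"
  proof (cases "A = {}")
    case True then show ?thesis by simp
  next
    case False
    then obtain r where "r \<in> A" by blast
    then have "A = {r}" using one by blast
    then show ?thesis by simp
  qed
  moreover have "card A = 1" if surj: "ps ` Rob = {..<n}"
  proof -
    obtain r where r: "r \<in> Rob" "ps r = i0" using surj i0 by (metis imageE lessThan_iff)
    have "r \<in> A" unfolding A_def ring_pts_def using r ot_any by simp
    then have "A = {r}" using one by blast
    then show ?thesis by simp
  qed
  ultimately show ?thesis using k1 by simp
qed

end

lemma present_mono: "present lv r u \<Longrightarrow> s \<le> u \<Longrightarrow> present lv r s"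
  unfolding present_def by (cases "lv r") auto

lemma left_lim_uniq:
  assumes "left_lim pos r T i" "left_lim pos r T i'"
  shows "i = i'"
proof -
  obtain e where e: "e > 0" "\<forall>s. T - e < s \<and> s < T \<longrightarrow> pos r s = i" using assms(1) unfolding left_lim_def by blast
  obtain e' where e': "e' > 0" "\<forall>s. T - e' < s \<and> s < T \<longrightarrow> pos r s = i'" using assms(2) unfolding left_lim_def by blast
  let ?s = "T - min e e' / 2"
  have "pos r ?s = i" using e e' by (intro e(2)[rule_format]) (simp add: min_def)
  moreover have "pos r ?s = i'" using e e' by (intro e'(2)[rule_format]) (simp add: min_def)
  ultimately show ?thesis by simp
qed


definition good :: "nat \<Rightarrow> (nat \<Rightarrow> real option) \<Rightarrow> (nat \<Rightarrow> real \<Rightarrow> nat) \<Rightarrow> real \<Rightarrow> bool" where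
  "good n lv pos u \<longleftrightarrow> (\<forall>r1<n. \<forall>r2<n. r1 \<noteq> r2 \<longrightarrow> present lv r1 u \<longrightarrow> present lv r2 u \<longrightarrow> pos r1 u \<noteq> pos r2 u)"

lemma adj_sym': "adj n c rr i j \<Longrightarrow> adj n c rr j i"
  unfolding adj_def by (auto simp: dist_commute)

lemma good_T:
  assumes sync: "sync_schedule n c rr f g" and DL: "distinct_links n c rr"
    and run: "scs_run n c rr f g lv pos" and T: "T > 0"
    and before: "\<And>u. 0 \<le> u \<Longrightarrow> u < T \<Longrightarrow> good n lv pos u"
  shows "good n lv pos T"
  unfolding good_def
proof (intro allI impI)
  fix r1 r2 assume r: "r1 < n" "r2 < n" "r1 \<noteq> r2" "present lv r1 T" "present lv r2 T"
  have cl4: "\<forall>r<n. \<forall>t>0. present lv r t \<longrightarrow>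
        (\<exists>i. left_lim pos r t i \<and>
           ((\<exists>j. adj n c rr i j \<and> ang_eq (sched f g i t) (link c i j) \<and>
                 circle_empty n lv pos j t \<and> pos r t = j) \<or>
            (\<not> (\<exists>j. adj n c rr i j \<and> ang_eq (sched f g i t) (link c i j) \<and>
                 circle_empty n lv pos j t) \<and> pos r t = i)))"
    using run unfolding scs_run_def by blast
  obtain i1 where L1: "left_lim pos r1 T i1" and D1: "(\<exists>j. adj n c rr i1 j \<and> ang_eq (sched f g i1 T) (link c i1 j) \<and>
                 circle_empty n lv pos j T \<and> pos r1 T = j) \<or> pos r1 T = i1"
    using cl4 r T by blast
  obtain i2 where L2: "left_lim pos r2 T i2" and D2: "(\<exists>j. adj n c rr i2 j \<and> ang_eq (sched f g i2 T) (link c i2 j) \<and>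
                 circle_empty n lv pos j T \<and> pos r2 T = j) \<or> pos r2 T = i2"
    using cl4 r T by blast
  have i12: "i1 \<noteq> i2"
  proof -
    obtain e1 where e1: "e1 > 0" "\<forall>s. T - e1 < s \<and> s < T \<longrightarrow> pos r1 s = i1" using L1 unfolding left_lim_def by blast
    obtain e2 where e2: "e2 > 0" "\<forall>s. T - e2 < s \<and> s < T \<longrightarrow> pos r2 s = i2" using L2 unfolding left_lim_def by blast
    define s where "s = T - min (min e1 e2) T / 2"
    have s: "0 \<le> s" "s < T" "T - e1 < s" "T - e2 < s" unfolding s_def using e1 e2 T by (auto simp: min_def)
    have "pos r1 s = i1" "pos r2 s = i2" using e1 e2 s by auto
    moreover have "present lv r1 s" "present lv r2 s" using r s present_mono[of lv _ T s] by auto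
    moreover have "good n lv pos s" using before s by blast
    ultimately show ?thesis using r unfolding good_def by metis
  qed
  have sw: "pos r' T \<noteq> j" if "r' < n" "present lv r' T" "left_lim pos r' T i'" "pos r' T = i'"
      "circle_empty n lv pos j T" for r' i' j
    using that unfolding circle_empty_def by blast
  have sy: "ang_eq (sched f g j T) (link c j i)" if "adj n c rr i j" "ang_eq (sched f g i T) (link c i j)" for i j
    using sync that unfolding sync_schedule_def by blast
  show "pos r1 T \<noteq> pos r2 T"
  proof (cases "pos r1 T = i1")
    case s1: True
    show ?thesis
    proof (cases "pos r2 T = i2")
      case True then show ?thesis using s1 i12 by simp
    next
      case False
      then obtain j where j: "circle_empty n lv pos j T" "pos r2 T = j" using D2 by blast
      then show ?thesis using sw[of r1 i1 j] r L1 s1 by simp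
    qed
  next
    case s1: False
    then obtain j1 where j1: "adj n c rr i1 j1" "ang_eq (sched f g i1 T) (link c i1 j1)"
      "circle_empty n lv pos j1 T" "pos r1 T = j1" using D1 by blast
    show ?thesis
    proof (cases "pos r2 T = i2")
      case True then show ?thesis using sw[of r2 i2 j1] r L2 j1 by simp
    next
      case False
      then obtain j2 where j2: "adj n c rr i2 j2" "ang_eq (sched f g i2 T) (link c i2 j2)"
        "circle_empty n lv pos j2 T" "pos r2 T = j2" using D2 by blast
      show ?thesis
      proof
        assume eq: "pos r1 T = pos r2 T"
        then have jj: "j1 = j2" using j1 j2 by simp
        have a1: "ang_eq (sched f g j1 T) (link c j1 i1)" using sy j1 by blast
        have a2: "ang_eq (sched f g j1 T) (link c j1 i2)" using sy j2 jj by blast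
        have "ang_eq (link c j1 i1) (link c j1 i2)" using ang_eq_trans[OF ang_eq_sym[OF a1] a2] .
        moreover have "adj n c rr j1 i1" "adj n c rr j1 i2" using adj_sym' j1 j2 jj by auto
        ultimately show False using DL i12 unfolding distinct_links_def by blast
      qed
    qed
  qed
qed

lemma dyn:
  assumes sync: "sync_schedule n c rr f g" and DL: "distinct_links n c rr"
    and run: "scs_run n c rr f g lv pos" and t: "t \<ge> 0"
  shows "good n lv pos t"
proof (rule ccontr)
  assume bad: "\<not> good n lv pos t"
  define B where "B = {u. 0 \<le> u \<and> \<not> good n lv pos u}"
  have Bne: "B \<noteq> {}" using bad t unfolding B_def by blast
  have bdd: "bdd_below B" unfolding B_def by (rule bdd_belowI[of _ 0]) auto
  define T where "T = Inf B"
  have T0: "0 \<le> T" unfolding T_def using Bne by (intro cInf_greatest) (auto simp: B_def)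
  have bef: "good n lv pos u" if "0 \<le> u" "u < T" for u
  proof (rule ccontr)
    assume "\<not> good n lv pos u"
    then have "u \<in> B" using that unfolding B_def by blast
    then have "T \<le> u" unfolding T_def using bdd by (rule cInf_lower)
    then show False using that by simp
  qed
  have gT: "good n lv pos T"
  proof (cases "T = 0")
    case True
    have "\<forall>r<n. pos r 0 = r" using run unfolding scs_run_def by blast
    then show ?thesis using True unfolding good_def by simp
  next
    case False
    then show ?thesis using good_T[OF sync DL run] bef T0 by simp
  qed
  have cl3: "\<forall>r<n. \<forall>t\<ge>0. present lv r t \<longrightarrow> (\<exists>e>0. \<forall>s. t \<le> s \<and> s < t + e \<longrightarrow> pos r s = pos r t)"
    using run unfolding scs_run_def by blast
  define es where "es r = (SOME e. e > 0 \<and> (\<forall>s. T \<le> s \<and> s < T + e \<longrightarrow> pos r s = pos r T))" for r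
  define e where "e r = (if r < n \<and> present lv r T then es r else 1)" for r
  have e: "e r > 0 \<and> (r < n \<and> present lv r T \<longrightarrow> (\<forall>s. T \<le> s \<and> s < T + e r \<longrightarrow> pos r s = pos r T))" for r
  proof (cases "r < n \<and> present lv r T")
    case True
    then have "\<exists>e>0. \<forall>s. T \<le> s \<and> s < T + e \<longrightarrow> pos r s = pos r T" using cl3 T0 by blast
    then have h: "es r > 0 \<and> (\<forall>s. T \<le> s \<and> s < T + es r \<longrightarrow> pos r s = pos r T)"
      unfolding es_def by (rule someI_ex)
    have er: "e r = es r" unfolding e_def by (rule if_P[OF True])
    show ?thesis unfolding er using h by blast
  next
    case False
    then have er: "e r = 1" unfolding e_def by (rule if_not_P)
    show ?thesis unfolding er using False by auto
  qed
  define E where "E = Min (e ` {..<n} \<union> {1})"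
  have Epos: "E > 0" unfolding E_def using e by (subst Min_gr_iff) auto
  have Ele: "E \<le> e r" if "r < n" for r unfolding E_def using that by (intro Min_le) auto
  have after: "good n lv pos u" if "T \<le> u" "u < T + E" for u
    unfolding good_def
  proof (intro allI impI)
    fix r1 r2 assume r: "r1 < n" "r2 < n" "r1 \<noteq> r2" "present lv r1 u" "present lv r2 u"
    have p: "present lv r1 T" "present lv r2 T" using present_mono[OF r(4) that(1)] present_mono[OF r(5) that(1)] by auto
    have u1: "T \<le> u \<and> u < T + e r1" using that Ele[OF r(1)] by linarith
    have u2: "T \<le> u \<and> u < T + e r2" using that Ele[OF r(2)] by linarith
    have "pos r1 u = pos r1 T" using e[of r1] r(1) p(1) u1 by blast
    moreover have "pos r2 u = pos r2 T" using e[of r2] r(2) p(2) u2 by blast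
    ultimately show "pos r1 u \<noteq> pos r2 u" using gT r p unfolding good_def by simp
  qed
  have "T + E \<le> T" unfolding T_def[symmetric]
  proof -
    have "T + E \<le> Inf B"
    proof (rule cInf_greatest[OF Bne])
      fix u assume u: "u \<in> B"
      then have "T \<le> u" unfolding T_def using bdd by (rule cInf_lower)
      moreover have "\<not> good n lv pos u" using u unfolding B_def by blast
      ultimately show "T + E \<le> u" using after by force
    qed
    then show ?thesis unfolding T_def .
  qed
  then show False using Epos by simp
qed


theorem lemma10:
  fixes n :: nat and c :: "nat \<Rightarrow> complex" and rr :: real
    and f :: "nat \<Rightarrow> real" and g :: "nat \<Rightarrow> int"
    and lv :: "nat \<Rightarrow> real option" and pos :: "nat \<Rightarrow> real \<Rightarrow> nat"
    and i0 :: nat and th0 :: real and k :: nat and t :: real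
  assumes "trajectory_system n c rr"
    and "distinct_links n c rr"
    and "sync_schedule n c rr f g"
    and "scs_run n c rr f g lv pos"
    and "i0 < n"
    and "ring_length_is n c rr g i0 th0 (2 * real k * pi)"
    and "t \<ge> 0"
  shows "card (robots_in_ring n c rr f g lv pos i0 th0 t) \<le> k \<and>
    ((\<forall>r<n. present lv r t) \<longrightarrow> card (robots_in_ring n c rr f g lv pos i0 th0 t) = k)"
proof -
  define Rob where "Rob = {r. r < n \<and> present lv r t}"
  define ps where "ps = (\<lambda>r. pos r t)"
  have RS: "Rob \<subseteq> {..<n}" unfolding Rob_def by auto
  have gd: "good n lv pos t" using dyn[OF assms(3) assms(2) assms(4) assms(7)] .
  have inj: "inj_on ps Rob"
  proof (rule inj_onI)
    fix r1 r2 assume "r1 \<in> Rob" "r2 \<in> Rob" "ps r1 = ps r2"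
    then show "r1 = r2" using gd unfolding good_def Rob_def ps_def by blast
  qed
  have cl2: "\<forall>r<n. \<forall>t\<ge>0. present lv r t \<longrightarrow> pos r t < n" using assms(4) unfolding scs_run_def by blast
  have psn: "ps ` Rob \<subseteq> {..<n}" unfolding Rob_def ps_def using cl2 assms(7) by auto
  have eqA: "robots_in_ring n c rr f g lv pos i0 th0 t = {r \<in> Rob. (ps r, sched f g (ps r) t) \<in> ring_pts n c rr g i0 th0}"
    unfolding robots_in_ring_def Rob_def ps_def by auto
  have surj: "ps ` Rob = {..<n}" if "\<forall>r<n. present lv r t"
  proof -
    have "Rob = {..<n}" using that unfolding Rob_def by auto
    then show ?thesis using endo_inj_surj[of Rob ps] psn inj by simp
  qed
  have cnt: "card {r \<in> Rob. (ps r, sched f g (ps r) t) \<in> ring_pts n c rr g i0 th0} \<le> k \<and>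
     (ps ` Rob = {..<n} \<longrightarrow> card {r \<in> Rob. (ps r, sched f g (ps r) t) \<in> ring_pts n c rr g i0 th0} = k)"
  proof (cases "nbrs n c rr i0 = {}")
    case True
    interpret ringiso n c rr f g i0 th0 k
      by unfold_locales (use assms True in auto)
    show ?thesis by (rule count_iso[OF RS inj psn])
  next
    case False
    interpret ringlen n c rr f g i0 th0 k
      by unfold_locales (use assms False in auto)
    show ?thesis by (rule count[OF RS inj psn])
  qed
  show ?thesis unfolding eqA using cnt surj by blast
qed

end
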